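(* An action theory $\Theta=S\cup E\cup X$ is modular if and only if the big model of $\Theta$ is a model of $\Theta$.
   Context: Fix a set $\mathrm{Act}$ of atomic actions and a set $\mathrm{Prop}$ of atoms. Boolean formulas are classical propositional formulas over $\mathrm{Prop}$; $\models_{CPL}$ is classical consequence; a valuation is a maximal consistent set of literals, and $\mathrm{val}(S)$ is the set of valuations satisfying every formula of a set $S$ of Boolean formulas. Modal formulas are built from Boolean formulas using the Boolean connectives and a box $[a]$ for each $a\in\mathrm{Act}$; $\langle a\rangle\Phi:=\neg[a]\neg\Phi$. A PDL-model is $M=\langle W,R\rangle$ where $W$ is a set of valuations (worlds) and $R$ assigns to each $a$ a relation $R_a\subseteq W\times W$; $w\models_M p$ iff $p\in w$, $w\models_M[a]\Phi$ iff $w'\models_M\Phi$ for all $(w,w')\in R_a$, Boolean connectives as usual. $M\models\Phi$ iff $\Phi$ holds at every world of $M$; $M\models\Sigma$ iff $M\models\Phi$ for all $\Phi\in\Sigma$; $\Sigma\models_{PDL}\Phi$ iff every PDL-model of $\Sigma$ is a model of $\Phi$. A static law is a Boolean formula; an effect law for $a$ is $\varphi\to[a]\psi$ and an executability law for $a$ is $\varphi\to\langle a\rangle\top$, with $\varphi,\psi$ Boolean. An action theory is $\Theta=S\cup E\cup X$ with $S$ a set of static laws, $E$ a set of effect laws and $X$ a set of executability laws; $E_a$ denotes the effect laws for $a$. $\Theta$ is modular iff for every Boolean $\varphi$, $\Theta\models_{PDL}\varphi$ implies $S\models_{CPL}\varphi$. The big model of $\Theta$ is $M_{big}=\langle W_{big},R_{big}\rangle$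 with $W_{big}=\mathrm{val}(S)$ and, for each $a$, $(R_{big})_a=\{(w,w')\in W_{big}\times W_{big}:$ for all $\varphi\to[a]\psi\in E_a$, if $w\models\varphi$ then $w'\models\psi\}$. *)

theory Defs
  imports Main
begin

datatype 'p bform =
    Atom 'p | BTop | BBot | BNeg "'p bform" | BAnd "'p bform" "'p bform"
  | BOr "'p bform" "'p bform" | BImp "'p bform" "'p bform"

text \<open>A valuation (maximal consistent set of literals) is represented by the set
  of atoms it makes true.\<close>
type_synonym 'p valuation = "'p set"

fun bsat :: "'p valuation \<Rightarrow> 'p bform \<Rightarrow> bool" where
  "bsat w (Atom p) = (p \<in> w)"
| "bsat w BTop = True"
| "bsat w BBot = False"
| "bsat w (BNeg f) = (\<not> bsat w f)"
| "bsat w (BAnd f g) = (bsat w f \<and> bsat w g)"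
| "bsat w (BOr f g) = (bsat w f \<or> bsat w g)"
| "bsat w (BImp f g) = (bsat w f \<longrightarrow> bsat w g)"

definition val :: "'p bform set \<Rightarrow> 'p valuation set" where
  "val S = {w. \<forall>f\<in>S. bsat w f}"

definition cpl_conseq :: "'p bform set \<Rightarrow> 'p bform \<Rightarrow> bool" where
  "cpl_conseq S f \<longleftrightarrow> (\<forall>w\<in>val S. bsat w f)"

datatype ('a, 'p) mform =
    MB "'p bform" | MNeg "('a,'p) mform" | MAnd "('a,'p) mform" "('a,'p) mform"
  | MOr "('a,'p) mform" "('a,'p) mform" | MImp "('a,'p) mform" "('a,'p) mform"
  | Box 'a "('a,'p) mform"

definition Dia :: "'a \<Rightarrow> ('a,'p) mform \<Rightarrow> ('a,'p) mform" where
  "Dia a F = MNeg (Box a (MNeg F))"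

definition pdl_model :: "'p valuation set \<Rightarrow> ('a \<Rightarrow> ('p valuation \<times> 'p valuation) set) \<Rightarrow> bool" where
  "pdl_model W R \<longleftrightarrow> (\<forall>a. R a \<subseteq> W \<times> W)"

fun msat :: "('a \<Rightarrow> ('p valuation \<times> 'p valuation) set) \<Rightarrow> 'p valuation \<Rightarrow> ('a,'p) mform \<Rightarrow> bool" where
  "msat R w (MB f) = bsat w f"
| "msat R w (MNeg F) = (\<not> msat R w F)"
| "msat R w (MAnd F G) = (msat R w F \<and> msat R w G)"
| "msat R w (MOr F G) = (msat R w F \<or> msat R w G)"
| "msat R w (MImp F G) = (msat R w F \<longrightarrow> msat R w G)"
| "msat R w (Box a F) = (\<forall>w'. (w, w') \<in> R a \<longrightarrow> msat R w' F)"

definition model_of :: "'p valuation set \<Rightarrow> ('a \<Rightarrow> ('p valuation \<times> 'p valuation) set) \<Rightarrow> ('a,'p) mform \<Rightarrow> bool" where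
  "model_of W R F \<longleftrightarrow> (\<forall>w\<in>W. msat R w F)"

definition model_of_set :: "'p valuation set \<Rightarrow> ('a \<Rightarrow> ('p valuation \<times> 'p valuation) set) \<Rightarrow> ('a,'p) mform set \<Rightarrow> bool" where
  "model_of_set W R \<Sigma> \<longleftrightarrow> (\<forall>F\<in>\<Sigma>. model_of W R F)"

definition pdl_conseq :: "('a,'p) mform set \<Rightarrow> ('a,'p) mform \<Rightarrow> bool" where
  "pdl_conseq \<Sigma> F \<longleftrightarrow> (\<forall>W R. pdl_model W R \<longrightarrow> model_of_set W R \<Sigma> \<longrightarrow> model_of W R F)"

text \<open>Laws. Static law: Boolean formula. Effect law for a: (a, phi, psi) standing for
  phi \<longrightarrow> [a] psi. Executability law for a: (a, phi) standing for phi \<longrightarrow> <a> True.\<close>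
definition effect_fml :: "'a \<times> 'p bform \<times> 'p bform \<Rightarrow> ('a,'p) mform" where
  "effect_fml e = (case e of (a, \<phi>, \<psi>) \<Rightarrow> MImp (MB \<phi>) (Box a (MB \<psi>)))"

definition exec_fml :: "'a \<times> 'p bform \<Rightarrow> ('a,'p) mform" where
  "exec_fml x = (case x of (a, \<phi>) \<Rightarrow> MImp (MB \<phi>) (Dia a (MB BTop)))"

definition theory_fmls :: "'p bform set \<Rightarrow> ('a \<times> 'p bform \<times> 'p bform) set \<Rightarrow> ('a \<times> 'p bform) set \<Rightarrow> ('a,'p) mform set" where
  "theory_fmls S E X = MB ` S \<union> effect_fml ` E \<union> exec_fml ` X"

definition modular :: "'p bform set \<Rightarrow> ('a \<times> 'p bform \<times> 'p bform) set \<Rightarrow> ('a \<times> 'p bform) set \<Rightarrow> bool" where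
  "modular S E X \<longleftrightarrow> (\<forall>\<phi>. pdl_conseq (theory_fmls S E X) (MB \<phi>) \<longrightarrow> cpl_conseq S \<phi>)"

definition big_W :: "'p bform set \<Rightarrow> 'p valuation set" where
  "big_W S = val S"

definition big_R :: "'p bform set \<Rightarrow> ('a \<times> 'p bform \<times> 'p bform) set \<Rightarrow> 'a \<Rightarrow> ('p valuation \<times> 'p valuation) set" where
  "big_R S E a = {(w, w'). w \<in> val S \<and> w' \<in> val S \<and>
       (\<forall>\<phi> \<psi>. (a, \<phi>, \<psi>) \<in> E \<longrightarrow> bsat w \<phi> \<longrightarrow> bsat w' \<psi>)}"

end

theory Submission
  imports Defs
begin

definition fsat :: "'p bform set \<Rightarrow> bool" where
  "fsat T \<longleftrightarrow> (\<forall>F. F \<subseteq> T \<longrightarrow> finite F \<longrightarrow> (\<exists>w. \<forall>f\<in>F. bsat w f))"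

lemma maxfs_clos:
  assumes fs: "fsat M" and mx: "\<And>X. fsat X \<Longrightarrow> M \<subseteq> X \<Longrightarrow> X = M"
    and F: "finite F" "F \<subseteq> M" and imp: "\<And>w. (\<forall>f\<in>F. bsat w f) \<Longrightarrow> bsat w g"
  shows "g \<in> M"
proof -
  have "fsat (insert g M)"
    unfolding fsat_def
  proof (intro allI impI)
    fix G assume G: "G \<subseteq> insert g M" "finite G"
    then have "G - {g} \<union> F \<subseteq> M" "finite (G - {g} \<union> F)" using F by auto
    then obtain w where w: "\<forall>f\<in>G - {g} \<union> F. bsat w f" using fs unfolding fsat_def by blast
    then have "bsat w g" using imp by blast
    with w show "\<exists>w. \<forall>f\<in>G. bsat w f" by blast
  qed
  then have "insert g M = M" using mx by blast
  then show ?thesis by blast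
qed

lemma maxfs_dich:
  assumes fs: "fsat M" and mx: "\<And>X. fsat X \<Longrightarrow> M \<subseteq> X \<Longrightarrow> X = M"
  shows "f \<in> M \<or> BNeg f \<in> M"
proof (rule ccontr)
  assume n: "\<not> (f \<in> M \<or> BNeg f \<in> M)"
  have "\<not> fsat (insert f M)" using mx n by blast
  then obtain F1 where F1: "F1 \<subseteq> insert f M" "finite F1" "\<not> (\<exists>w. \<forall>g\<in>F1. bsat w g)"
    unfolding fsat_def by blast
  have "\<not> fsat (insert (BNeg f) M)" using mx n by blast
  then obtain F2 where F2: "F2 \<subseteq> insert (BNeg f) M" "finite F2" "\<not> (\<exists>w. \<forall>g\<in>F2. bsat w g)"
    unfolding fsat_def by blast
  have "(F1 - {f}) \<union> (F2 - {BNeg f}) \<subseteq> M" "finite ((F1 - {f}) \<union> (F2 - {BNeg f}))"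
    using F1 F2 by auto
  then obtain w where w: "\<forall>g\<in>(F1 - {f}) \<union> (F2 - {BNeg f}). bsat w g"
    using fs unfolding fsat_def by blast
  show False
  proof (cases "bsat w f")
    case True
    have "\<forall>g\<in>F1. bsat w g" using F1(1) w True by auto
    then show False using F1(3) by blast
  next
    case False
    have "\<forall>g\<in>F2. bsat w g" using F2(1) w False by auto
    then show False using F2(3) by blast
  qed
qed

lemma maxfs_sat:
  assumes fs: "fsat M" and mx: "\<And>X. fsat X \<Longrightarrow> M \<subseteq> X \<Longrightarrow> X = M"
  shows "bsat {p. Atom p \<in> M} f \<longleftrightarrow> f \<in> M"
proof -
  have cl: "\<And>F g. finite F \<Longrightarrow> F \<subseteq> M \<Longrightarrow> (\<And>w. (\<forall>f\<in>F. bsat w f) \<Longrightarrow> bsat w g) \<Longrightarrow> g \<in> M"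
    using maxfs_clos[OF fs mx] by blast
  have uns: "\<And>F. finite F \<Longrightarrow> F \<subseteq> M \<Longrightarrow> \<exists>w. \<forall>f\<in>F. bsat w f"
    using fs unfolding fsat_def by blast
  have di: "\<And>f. f \<in> M \<or> BNeg f \<in> M" using maxfs_dich[OF fs mx] by blast
  show ?thesis
  proof (induction f)
    case (Atom x) then show ?case by simp
  next
    case BTop then show ?case using cl[of "{}" BTop] by simp
  next
    case BBot then show ?case using uns[of "{BBot}"] by auto
  next
    case (BNeg f)
    have "\<not> (f \<in> M \<and> BNeg f \<in> M)" using uns[of "{f, BNeg f}"] by auto
    then show ?case using BNeg di[of f] by auto
  next
    case (BAnd f g)
    have 1: "BAnd f g \<in> M \<Longrightarrow> f \<in> M" using cl[of "{BAnd f g}" f] by auto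
    have 2: "BAnd f g \<in> M \<Longrightarrow> g \<in> M" using cl[of "{BAnd f g}" g] by auto
    have 3: "f \<in> M \<Longrightarrow> g \<in> M \<Longrightarrow> BAnd f g \<in> M" using cl[of "{f, g}" "BAnd f g"] by auto
    show ?case using 1 2 3 BAnd by auto
  next
    case (BOr f g)
    have 1: "f \<in> M \<Longrightarrow> BOr f g \<in> M" using cl[of "{f}" "BOr f g"] by auto
    have 2: "g \<in> M \<Longrightarrow> BOr f g \<in> M" using cl[of "{g}" "BOr f g"] by auto
    have 3: "BOr f g \<in> M \<Longrightarrow> f \<in> M \<or> g \<in> M"
    proof (rule ccontr)
      assume a: "BOr f g \<in> M" "\<not> (f \<in> M \<or> g \<in> M)"
      then have "BNeg f \<in> M" "BNeg g \<in> M" using di by blast+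
      then show False using a uns[of "{BOr f g, BNeg f, BNeg g}"] by auto
    qed
    show ?case using 1 2 3 BOr by auto
  next
    case (BImp f g)
    have 1: "BNeg f \<in> M \<Longrightarrow> BImp f g \<in> M" using cl[of "{BNeg f}" "BImp f g"] by auto
    have 2: "g \<in> M \<Longrightarrow> BImp f g \<in> M" using cl[of "{g}" "BImp f g"] by auto
    have 3: "BImp f g \<in> M \<Longrightarrow> f \<in> M \<Longrightarrow> g \<in> M" using cl[of "{BImp f g, f}" g] by auto
    have 4: "\<not> (f \<in> M \<and> BNeg f \<in> M)" using uns[of "{f, BNeg f}"] by auto
    show ?case using 1 2 3 4 BImp di[of f] by auto
  qed
qed

lemma compactness:
  assumes "fsat T"
  shows "\<exists>w. \<forall>f\<in>T. bsat w f"
proof -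
  let ?A = "{M. T \<subseteq> M \<and> fsat M}"
  have "\<exists>M\<in>?A. \<forall>X\<in>?A. M \<subseteq> X \<longrightarrow> X = M"
  proof (rule subset_Zorn_nonempty)
    show "?A \<noteq> {}" using assms by blast
  next
    fix C assume C: "C \<noteq> {}" "subset.chain ?A C"
    have "fsat (\<Union>C)" unfolding fsat_def
    proof (intro allI impI)
      fix F assume F: "F \<subseteq> \<Union>C" "finite F"
      obtain B where "B \<in> C" "F \<subseteq> B"
        using finite_subset_Union_chain[OF F(2) F(1) C(1) C(2)] by blast
      then show "\<exists>w. \<forall>f\<in>F. bsat w f" using C(2) F(2) unfolding subset_chain_def fsat_def by blast
    qed
    moreover have "T \<subseteq> \<Union>C" using C unfolding subset_chain_def by blast
    ultimately show "\<Union>C \<in> ?A" by blast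
  qed
  then obtain M where M: "T \<subseteq> M" "fsat M" "\<And>X. fsat X \<Longrightarrow> M \<subseteq> X \<Longrightarrow> X = M"
    by (metis (no_types, lifting) dual_order.trans mem_Collect_eq)
  show ?thesis using maxfs_sat[OF M(2) M(3)] M(1) by blast
qed

fun bconj :: "'p bform list \<Rightarrow> 'p bform" where
  "bconj [] = BTop"
| "bconj (f # fs) = BAnd f (bconj fs)"

lemma bsat_bconj: "bsat w (bconj fs) \<longleftrightarrow> (\<forall>f\<in>set fs. bsat w f)"
  by (induction fs) auto

theorem theorem3:
  fixes S :: "'p bform set"
    and E :: "('a \<times> 'p bform \<times> 'p bform) set"
    and X :: "('a \<times> 'p bform) set"
  shows "modular S E X \<longleftrightarrow> model_of_set (big_W S) (big_R S E) (theory_fmls S E X)"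
proof
  assume mb: "model_of_set (big_W S) (big_R S E) (theory_fmls S E X)"
  have pm: "pdl_model (big_W S) (big_R S E)"
    unfolding pdl_model_def big_R_def big_W_def by auto
  show "modular S E X"
    unfolding modular_def
  proof (intro allI impI)
    fix \<phi> assume "pdl_conseq (theory_fmls S E X) (MB \<phi>)"
    then have "model_of (big_W S) (big_R S E) (MB \<phi>)"
      using pm mb unfolding pdl_conseq_def by blast
    then show "cpl_conseq S \<phi>"
      unfolding model_of_def cpl_conseq_def big_W_def by simp
  qed
next
  assume md: "modular S E X"
  have exe: "\<exists>w'. (w, w') \<in> big_R S E a"
    if w: "w \<in> val S" and ax: "(a, \<chi>) \<in> X" and wc: "bsat w \<chi>" for w a \<chi>
  proof (rule ccontr)
    assume no: "\<nexists>w'. (w, w') \<in> big_R S E a"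
    let ?T = "S \<union> {\<psi>. \<exists>\<phi>. (a, \<phi>, \<psi>) \<in> E \<and> bsat w \<phi>}"
    have "\<not> (\<exists>v. \<forall>f\<in>?T. bsat v f)"
    proof
      assume "\<exists>v. \<forall>f\<in>?T. bsat v f"
      then obtain v where v: "\<forall>f\<in>?T. bsat v f" by blast
      then have "(w, v) \<in> big_R S E a"
        using w unfolding big_R_def val_def by auto
      then show False using no by blast
    qed
    then have "\<not> fsat ?T" using compactness[of ?T] by blast
    then obtain F where F: "F \<subseteq> ?T" "finite F" "\<not> (\<exists>v. \<forall>f\<in>F. bsat v f)"
      unfolding fsat_def by blast
    define g where "g \<psi> = (SOME \<phi>. (a, \<phi>, \<psi>) \<in> E \<and> bsat w \<phi>)" for \<psi>
    have g: "(a, g \<psi>, \<psi>) \<in> E \<and> bsat w (g \<psi>)" if "\<psi> \<in> F - S" for \<psi>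
    proof -
      have "\<exists>\<phi>. (a, \<phi>, \<psi>) \<in> E \<and> bsat w \<phi>" using that F(1) by blast
      then show ?thesis unfolding g_def by (rule someI_ex)
    qed
    obtain xs where xs: "set xs = g ` (F - S)" using finite_list[of "g ` (F - S)"] F(2) by blast
    define \<delta> where "\<delta> = BAnd \<chi> (bconj xs)"
    have "pdl_conseq (theory_fmls S E X) (MB (BNeg \<delta>))"
      unfolding pdl_conseq_def
    proof (intro allI impI)
      fix W R assume pm: "pdl_model W R" and ms: "model_of_set W R (theory_fmls S E X)"
      show "model_of W R (MB (BNeg \<delta>))" unfolding model_of_def
      proof
        fix v assume vW: "v \<in> W"
        show "msat R v (MB (BNeg \<delta>))"
        proof (rule ccontr)
          assume "\<not> msat R v (MB (BNeg \<delta>))"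
          then have vd: "bsat v \<chi>" "\<forall>f\<in>set xs. bsat v f"
            by (auto simp: \<delta>_def bsat_bconj)
          have "model_of W R (exec_fml (a, \<chi>))" using ms ax unfolding model_of_set_def theory_fmls_def by blast
          then have "msat R v (exec_fml (a, \<chi>))" using vW unfolding model_of_def by blast
          then obtain v' where v': "(v, v') \<in> R a" using vd(1) by (auto simp: exec_fml_def Dia_def)
          then have v'W: "v' \<in> W" using pm unfolding pdl_model_def by blast
          have "\<forall>f\<in>F. bsat v' f"
          proof
            fix f assume fF: "f \<in> F"
            show "bsat v' f"
            proof (cases "f \<in> S")
              case True
              then have "model_of W R (MB f)" using ms unfolding model_of_set_def theory_fmls_def by blast
              then show ?thesis using v'W unfolding model_of_def by simp
            next
              case False
              then have ge: "(a, g f, f) \<in> E" and "g f \<in> set xs" using g fF xs by auto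
              then have "bsat v (g f)" using vd by blast
              have "model_of W R (effect_fml (a, g f, f))" using ms ge unfolding model_of_set_def theory_fmls_def by blast
              then have "msat R v (effect_fml (a, g f, f))" using vW unfolding model_of_def by blast
              then show ?thesis using \<open>bsat v (g f)\<close> v' by (simp add: effect_fml_def)
            qed
          qed
          then show False using F(3) by blast
        qed
      qed
    qed
    then have "cpl_conseq S (BNeg \<delta>)" using md unfolding modular_def by blast
    then have "\<not> bsat w \<delta>" using w unfolding cpl_conseq_def by auto
    moreover have "bsat w \<delta>" using wc g xs by (auto simp: \<delta>_def bsat_bconj)
    ultimately show False by blast
  qed
  show "model_of_set (big_W S) (big_R S E) (theory_fmls S E X)"
    unfolding model_of_set_def theory_fmls_def
  proof (intro ballI)
    fix F assume "F \<in> MB ` S \<union> effect_fml ` E \<union> exec_fml ` X"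
    then consider (s) s where "s \<in> S" "F = MB s"
      | (e) a \<phi> \<psi> where "(a, \<phi>, \<psi>) \<in> E" "F = effect_fml (a, \<phi>, \<psi>)"
      | (x) a \<chi> where "(a, \<chi>) \<in> X" "F = exec_fml (a, \<chi>)" by auto
    then show "model_of (big_W S) (big_R S E) F"
    proof cases
      case s then show ?thesis unfolding model_of_def big_W_def val_def by auto
    next
      case e then show ?thesis unfolding model_of_def big_R_def effect_fml_def by auto
    next
      case x then show ?thesis using exe unfolding model_of_def big_W_def exec_fml_def Dia_def by auto
    qed
  qed
qed

end
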